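(* Let $2\leq l\leq t$ be integers, let $s\geq 2$, and let $m_1,\ldots,m_s\geq 1$ be integers. Then $$\sum_{i=1}^s ex(m_i,K_{l,t})\leq ex\left(\sum_{i=1}^s m_i-s+1,\,K_{l,t}\right).$$
   Context: $ex(m,K_{l,t})$ is the maximum number of edges of a simple graph on $m$ vertices containing no copy of the complete bipartite graph $K_{l,t}$ (parts of sizes $l$ and $t$) as a subgraph. *)

theory Defs
  imports Main
begin

definition simple_graph :: "'a set \<Rightarrow> 'a set set \<Rightarrow> bool" where
  "simple_graph V E \<longleftrightarrow> (\<forall>e\<in>E. e \<subseteq> V \<and> card e = 2)"

definition contains_Klt :: "nat \<Rightarrow> nat \<Rightarrow> 'a set \<Rightarrow> 'a set set \<Rightarrow> bool" where
  "contains_Klt l t V E \<longleftrightarrow>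
     (\<exists>A B. A \<subseteq> V \<and> B \<subseteq> V \<and> A \<inter> B = {} \<and> card A = l \<and> card B = t \<and>
            finite A \<and> finite B \<and> (\<forall>a\<in>A. \<forall>b\<in>B. {a, b} \<in> E))"

definition ex_Klt :: "nat \<Rightarrow> nat \<Rightarrow> nat \<Rightarrow> nat" where
  "ex_Klt m l t = Max {card E | E. simple_graph {0..<m} E \<and> \<not> contains_Klt l t {0..<m} E}"

end

theory Submission
  imports Defs
begin

lemma contains_transport:
  assumes "contains_Klt l t V E" "inj_on h V"
  shows "contains_Klt l t (h ` V) ((`) h ` E)"
proof -
  from assms(1) obtain A B where AB: "A \<subseteq> V" "B \<subseteq> V" "A \<inter> B = {}" "card A = l" "card B = t"
    "finite A" "finite B" "\<forall>a\<in>A. \<forall>b\<in>B. {a, b} \<in> E"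
    unfolding contains_Klt_def by blast
  have iA: "inj_on h A" using AB(1) assms(2) inj_on_subset by blast
  have iB: "inj_on h B" using AB(2) assms(2) inj_on_subset by blast
  have "h ` A \<inter> h ` B = {}"
    using AB(1,2,3) assms(2) unfolding inj_on_def by blast
  moreover have "\<forall>a\<in>h ` A. \<forall>b\<in>h ` B. {a, b} \<in> (`) h ` E"
  proof (intro ballI)
    fix x y assume "x \<in> h ` A" "y \<in> h ` B"
    then obtain a b where "a \<in> A" "b \<in> B" "x = h a" "y = h b" by blast
    then have "{a,b} \<in> E" "h ` {a,b} = {x,y}" using AB(8) by auto
    then show "{x, y} \<in> (`) h ` E" by (metis image_eqI)
  qed
  ultimately show ?thesis unfolding contains_Klt_def
    using AB iA iB card_image
    by (intro exI[of _ "h ` A"] exI[of _ "h ` B"]) auto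
qed

lemma separation:
  assumes "contains_Klt l t V (E1 \<union> E2)" "2 \<le> l" "2 \<le> t"
    and "V \<subseteq> P1 \<union> P2" "P1 \<inter> P2 \<subseteq> {c}"
    and "\<forall>e\<in>E1. e \<subseteq> P1" "\<forall>e\<in>E2. e \<subseteq> P2"
  shows "contains_Klt l t P1 E1 \<or> contains_Klt l t P2 E2"
proof -
  from assms(1) obtain A B where AB: "A \<subseteq> V" "B \<subseteq> V" "A \<inter> B = {}" "card A = l" "card B = t"
    "finite A" "finite B" and ed0: "\<forall>a\<in>A. \<forall>b\<in>B. {a, b} \<in> E1 \<union> E2"
    unfolding contains_Klt_def by blast
  have ed: "{a, b} \<in> E1 \<union> E2" if "a\<in>A" "b\<in>B" for a b using ed0 that by blast
  have edge: "(x \<in> P1 \<and> y \<in> P1) \<or> (x \<in> P2 \<and> y \<in> P2)" if "x \<in> A" "y \<in> B" for x y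
  proof -
    have "{x,y} \<in> E1 \<or> {x,y} \<in> E2" using ed[OF that] by simp
    then show ?thesis
    proof
      assume "{x,y} \<in> E1" then have "{x,y} \<subseteq> P1" using assms(6) by blast
      then show ?thesis by simp
    next
      assume "{x,y} \<in> E2" then have "{x,y} \<subseteq> P2" using assms(7) by blast
      then show ?thesis by simp
    qed
  qed
  have ex2: "\<exists>z\<in>S. z \<noteq> c" if "2 \<le> card S" for S :: "'a set"
  proof (rule ccontr)
    assume "\<not> ?thesis"
    then have "S \<subseteq> {c}" by auto
    then have "card S \<le> card {c}" by (intro card_mono) auto
    then have "card S \<le> 1" by simp
    with that show False by simp
  qed
  obtain a0 where a0: "a0 \<in> A" "a0 \<noteq> c" using ex2 AB(4) assms(2) by auto
  obtain b0 where b0: "b0 \<in> B" "b0 \<noteq> c" using ex2 AB(5) assms(3) by auto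
  have split: "A \<union> B \<subseteq> P1 \<or> A \<union> B \<subseteq> P2"
  proof (rule ccontr)
    assume "\<not> ?thesis"
    then have n1: "\<not> A \<union> B \<subseteq> P1" and n2: "\<not> A \<union> B \<subseteq> P2" by simp_all
    from n1 obtain u where u: "u \<in> A \<union> B" "u \<notin> P1" by (auto simp only: subset_iff)
    from n2 obtain w where w: "w \<in> A \<union> B" "w \<notin> P2" by (auto simp only: subset_iff)
    show False
    proof (cases "u \<in> A")
      case True
      show False
      proof (cases "w \<in> A")
        case True
        have "b0 \<in> P2" using edge[OF \<open>u\<in>A\<close> b0(1)] u by blast
        moreover have "b0 \<in> P1" using edge[OF True b0(1)] w by blast
        ultimately show False using assms(5) b0 by blast
      next
        case False
        then have "w \<in> B" using w by blast
        from edge[OF \<open>u\<in>A\<close> this] u w show False by blast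
      qed
    next
      case False
      then have uB: "u \<in> B" using u by blast
      show False
      proof (cases "w \<in> A")
        case True
        from edge[OF this uB] u w show False by blast
      next
        case False
        then have wB: "w \<in> B" using w by blast
        have "a0 \<in> P2" using edge[OF a0(1) uB] u by blast
        moreover have "a0 \<in> P1" using edge[OF a0(1) wB] w by blast
        ultimately show False using assms(5) a0 by blast
      qed
    qed
  qed
  have neq: "a \<noteq> b" if "a \<in> A" "b \<in> B" for a b using AB(3) that by blast
  show ?thesis
  proof (cases "A \<union> B \<subseteq> P1")
    case True
    have "\<forall>a\<in>A. \<forall>b\<in>B. {a, b} \<in> E1"
    proof (intro ballI)
      fix a b assume ab: "a \<in> A" "b \<in> B"
      show "{a,b} \<in> E1"
      proof (rule ccontr)
        assume "{a,b} \<notin> E1"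
        then have "{a,b} \<in> E2" using ed[OF ab] by blast
        then have "{a,b} \<subseteq> P1 \<inter> P2" using assms(7) True ab by blast
        then show False using assms(5) neq[OF ab] by blast
      qed
    qed
    then have "contains_Klt l t P1 E1" unfolding contains_Klt_def using AB True
      by (intro exI[of _ A] exI[of _ B]) auto
    then show ?thesis by blast
  next
    case False
    then have P: "A \<union> B \<subseteq> P2" using split by blast
    have "\<forall>a\<in>A. \<forall>b\<in>B. {a, b} \<in> E2"
    proof (intro ballI)
      fix a b assume ab: "a \<in> A" "b \<in> B"
      show "{a,b} \<in> E2"
      proof (rule ccontr)
        assume "{a,b} \<notin> E2"
        then have "{a,b} \<in> E1" using ed[OF ab] by blast
        then have "{a,b} \<subseteq> P1 \<inter> P2" using assms(6) P ab by blast
        then show False using assms(5) neq[OF ab] by blast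
      qed
    qed
    then have "contains_Klt l t P2 E2" unfolding contains_Klt_def using AB P
      by (intro exI[of _ A] exI[of _ B]) auto
    then show ?thesis by blast
  qed
qed

lemma ex_set_finite: fixes m l t :: nat shows "finite {card E | E. simple_graph {0..<m} E \<and> \<not> contains_Klt l t {0..<m} E}"
proof -
  have "{E. simple_graph {0..<m} E} \<subseteq> Pow (Pow {0..<(m::nat)})"
    unfolding simple_graph_def by auto
  then have "finite {E. simple_graph {0..<m} E}" by (rule finite_subset) simp
  then show ?thesis by simp
qed

lemma empty_free:
  assumes "1 \<le> l" "1 \<le> t" shows "\<not> contains_Klt l t V {}"
proof
  assume "contains_Klt l t V {}"
  then obtain A B where "card A = l" "card B = t" "\<forall>a\<in>A. \<forall>b\<in>B. {a, b} \<in> ({}::'a set set)"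
    unfolding contains_Klt_def by blast
  with assms show False by (metis card.empty empty_iff equals0I not_one_le_zero)
qed

lemma ex_attained:
  fixes m l t :: nat
  assumes "1 \<le> l" "1 \<le> t"
  shows "\<exists>E. simple_graph {0..<m} E \<and> \<not> contains_Klt l t {0..<m} E \<and> card E = ex_Klt m l t"
proof -
  have "card {} \<in> {card E | E. simple_graph {0..<m} E \<and> \<not> contains_Klt l t {0..<m} E}"
  proof -
    have "simple_graph {0..<m} {}" by (simp add: simple_graph_def)
    moreover have "\<not> contains_Klt l t {0..<m} {}" using empty_free[OF assms] .
    ultimately show ?thesis by (intro CollectI exI[of _ "{}"]) simp
  qed
  then have "ex_Klt m l t \<in> {card E | E. simple_graph {0..<m} E \<and> \<not> contains_Klt l t {0..<m} E}"
    unfolding ex_Klt_def using ex_set_finite by (intro Max_in) auto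
  then show ?thesis by auto
qed

lemma ex_ge:
  fixes m l t :: nat
  assumes "simple_graph {0..<m} E" "\<not> contains_Klt l t {0..<m} E"
  shows "card E \<le> ex_Klt m l t"
  unfolding ex_Klt_def using ex_set_finite assms by (intro Max_ge) auto

lemma two_pieces:
  assumes "2 \<le> l" "2 \<le> t" "1 \<le> a" "1 \<le> b"
  shows "ex_Klt a l t + ex_Klt b l t \<le> ex_Klt (a + b - 1) l t"
proof -
  obtain E1 where E1: "simple_graph {0..<a} E1" "\<not> contains_Klt l t {0..<a} E1" "card E1 = ex_Klt a l t"
    using ex_attained[of l t a] assms by auto
  obtain E2 where E2: "simple_graph {0..<b} E2" "\<not> contains_Klt l t {0..<b} E2" "card E2 = ex_Klt b l t"
    using ex_attained[of l t b] assms by auto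
  define f where "f = (\<lambda>x::nat. x + (a - 1))"
  define g where "g = (\<lambda>x::nat. x - (a - 1))"
  define E2' where "E2' = (`) f ` E2"
  define P2 where "P2 = f ` {0..<b}"
  have injf: "inj f" unfolding f_def by (auto simp: inj_on_def)
  have P2eq: "P2 = {a-1..<a+b-1}" unfolding P2_def f_def image_add_atLeastLessThan' using assms
    by (simp add: add.commute)
  have V: "{0..<a+b-1} = {0..<a} \<union> P2" using P2eq assms by auto
  have I: "{0..<a} \<inter> P2 \<subseteq> {a-1}" using P2eq by auto
  have E1sub: "\<forall>e\<in>E1. e \<subseteq> {0..<a}" using E1(1) unfolding simple_graph_def by blast
  have E2sub: "\<forall>e\<in>E2'. e \<subseteq> P2" using E2(1) unfolding simple_graph_def E2'_def P2_def by blast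
  have E2card: "\<forall>e\<in>E2'. card e = 2" using E2(1) unfolding simple_graph_def E2'_def
    by (auto simp: card_image inj_on_subset[OF injf])
  have simple: "simple_graph {0..<a+b-1} (E1 \<union> E2')"
    using E1(1) E2sub E2card V unfolding simple_graph_def by blast
  have free: "\<not> contains_Klt l t {0..<a+b-1} (E1 \<union> E2')"
  proof
    assume "contains_Klt l t {0..<a+b-1} (E1 \<union> E2')"
    from separation[OF this assms(1,2) _ I E1sub E2sub] V
    have "contains_Klt l t P2 E2'" using E1(2) by auto
    moreover have "inj_on g P2" unfolding P2eq g_def inj_on_def by auto
    ultimately have "contains_Klt l t (g ` P2) ((`) g ` E2')"
      by (rule contains_transport)
    moreover have "g ` P2 = {0..<b}" unfolding P2_def g_def f_def image_image by simp
    moreover have "(`) g ` E2' = E2"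
    proof -
      have "(`) g ` E2' = (\<lambda>e. g ` f ` e) ` E2" unfolding E2'_def image_image by simp
      also have "\<dots> = E2"
      proof -
        have "\<And>e. g ` f ` e = e" unfolding g_def f_def image_image by simp
        then show ?thesis by simp
      qed
      finally show ?thesis .
    qed
    ultimately show False using E2(2) by simp
  qed
  have fin1: "finite E1" using E1(1) unfolding simple_graph_def
    by (meson Pow_iff finite_Pow_iff finite_atLeastLessThan finite_subset subsetI)
  have fin2: "finite E2'" using simple unfolding simple_graph_def
    by (meson Pow_iff finite_Pow_iff finite_atLeastLessThan finite_subset subsetI UnCI)
  have disj: "E1 \<inter> E2' = {}"
  proof (rule ccontr)
    assume "E1 \<inter> E2' \<noteq> {}"
    then obtain e where e: "e \<in> E1" "e \<in> E2'" by blast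
    then have "e \<subseteq> {a-1}" using E1sub E2sub I by blast
    then have "card e \<le> card {a-1}" by (intro card_mono) auto
    then have "card e \<le> 1" by simp
    moreover have "card e = 2" using e E2card by blast
    ultimately show False by simp
  qed
  have "card E2' = card E2" unfolding E2'_def
    by (rule card_image) (meson injf inj_image_eq_iff inj_onI)
  then have "card (E1 \<union> E2') = ex_Klt a l t + ex_Klt b l t"
    using card_Un_disjoint[OF fin1 fin2 disj] E1(3) E2(3) by simp
  then show ?thesis using ex_ge[OF simple free] by simp
qed

lemma general:
  assumes "2 \<le> l" "2 \<le> t" "1 \<le> s" "\<And>i. i \<in> {1..s} \<Longrightarrow> 1 \<le> m i"
  shows "(\<Sum>i=1..s. ex_Klt (m i) l t) \<le> ex_Klt ((\<Sum>i=1..s. m i) - s + 1) l t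
         \<and> s \<le> (\<Sum>i=1..s. m i)"
  using assms(3,4)
proof (induction s rule: dec_induct)
  case base
  then show ?case by simp
next
  case (step n)
  have IH: "(\<Sum>i=1..n. ex_Klt (m i) l t) \<le> ex_Klt ((\<Sum>i=1..n. m i) - n + 1) l t"
    "n \<le> (\<Sum>i=1..n. m i)" using step by auto
  have mS: "1 \<le> m (Suc n)" using step by auto
  have "(\<Sum>i=1..Suc n. ex_Klt (m i) l t) = (\<Sum>i=1..n. ex_Klt (m i) l t) + ex_Klt (m (Suc n)) l t"
    by simp
  also have "\<dots> \<le> ex_Klt ((\<Sum>i=1..n. m i) - n + 1) l t + ex_Klt (m (Suc n)) l t" using IH by simp
  also have "\<dots> \<le> ex_Klt ((\<Sum>i=1..n. m i) - n + 1 + m (Suc n) - 1) l t"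
    by (rule two_pieces) (use assms mS in auto)
  also have "(\<Sum>i=1..n. m i) - n + 1 + m (Suc n) - 1 = (\<Sum>i=1..Suc n. m i) - Suc n + 1"
    using IH(2) mS by simp
  finally show ?case using IH(2) mS by simp
qed

theorem lemma2p6:
  fixes l t s :: nat and m :: "nat \<Rightarrow> nat"
  assumes "2 \<le> l" and "l \<le> t" and "2 \<le> s"
    and "\<And>i. i \<in> {1..s} \<Longrightarrow> 1 \<le> m i"
  shows "(\<Sum>i=1..s. ex_Klt (m i) l t) \<le> ex_Klt ((\<Sum>i=1..s. m i) - s + 1) l t"
  using general[of l t s m] assms by auto

end
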